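(* Let $\Gamma$ be a Taylor graph with vertex set $X$. For each $x\in X$, the Terwilliger algebra $T(x)$ of $\Gamma$ has dimension $\dim(T(x))=24$.
   Context: A Taylor graph is a distance-regular graph with intersection array $\{k,b,1;1,b,k\}$ where $b<k-1$; it has diameter $3$. Let $A$ be its adjacency matrix, $\partial$ its distance, and for $x\in X$ and $0\le i\le 3$ let $E^*_i(x)$ be the diagonal matrix with $(E^*_i(x))_{yy}=1$ if $\partial(x,y)=i$ and $0$ otherwise. The Terwilliger algebra $T(x)$ is the subalgebra of $\mathrm{Mat}_X(\mathbb{C})$ generated by $A,E^*_0(x),\dots,E^*_3(x)$; its dimension is as a complex vector space. *)

theory Defs
  imports "HOL-Analysis.Analysis"
begin

text \<open>Finite simple graphs on the vertex type 'n (vertex set X = UNIV),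
  given by an adjacency relation E.\<close>

definition simple_graph :: "('n \<Rightarrow> 'n \<Rightarrow> bool) \<Rightarrow> bool" where
  "simple_graph E \<longleftrightarrow> (\<forall>x y. E x y \<longrightarrow> E y x) \<and> (\<forall>x. \<not> E x x)"

definition connected_graph :: "('n \<Rightarrow> 'n \<Rightarrow> bool) \<Rightarrow> bool" where
  "connected_graph E \<longleftrightarrow> (\<forall>x y. \<exists>i. (E ^^ i) x y)"

text \<open>Path-length distance (meaningful for connected graphs).\<close>
definition gdist :: "('n \<Rightarrow> 'n \<Rightarrow> bool) \<Rightarrow> 'n \<Rightarrow> 'n \<Rightarrow> nat" where
  "gdist E x y = (LEAST i. (E ^^ i) x y)"

definition distance_regular ::
  "('n::finite \<Rightarrow> 'n \<Rightarrow> bool) \<Rightarrow> nat \<Rightarrow> (nat \<Rightarrow> nat) \<Rightarrow> (nat \<Rightarrow> nat) \<Rightarrow> bool" where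
  "distance_regular E d b c \<longleftrightarrow>
     simple_graph E \<and> connected_graph E \<and>
     (\<forall>x y. gdist E x y \<le> d) \<and> (\<exists>x y. gdist E x y = d) \<and>
     (\<forall>x y. let i = gdist E x y in
        (1 \<le> i \<longrightarrow> card {z. gdist E x z = i - 1 \<and> E y z} = c i) \<and>
        (i < d \<longrightarrow> card {z. gdist E x z = i + 1 \<and> E y z} = b i))"

definition taylor_graph :: "('n::finite \<Rightarrow> 'n \<Rightarrow> bool) \<Rightarrow> bool" where
  "taylor_graph E \<longleftrightarrow> (\<exists>k bb::nat. bb < k - 1 \<and>
     distance_regular E 3 (\<lambda>i. [k, bb, 1] ! i) (\<lambda>i. [0, 1, bb, k] ! i))"

definition adj_matrix :: "('n::finite \<Rightarrow> 'n \<Rightarrow> bool) \<Rightarrow> complex^'n^'n" where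
  "adj_matrix E = (\<chi> y z. if E y z then 1 else 0)"

definition dual_idempotent ::
  "('n::finite \<Rightarrow> 'n \<Rightarrow> bool) \<Rightarrow> 'n \<Rightarrow> nat \<Rightarrow> complex^'n^'n" where
  "dual_idempotent E x i = (\<chi> y z. if y = z \<and> gdist E x y = i then 1 else 0)"

definition cmat_scale :: "complex \<Rightarrow> complex^'n^'n \<Rightarrow> complex^'n^'n" where
  "cmat_scale a M = (\<chi> i j. a * M $ i $ j)"

inductive_set gen_algebra :: "(complex^'n::finite^'n) set \<Rightarrow> (complex^'n^'n) set"
  for G where
  gen: "M \<in> G \<Longrightarrow> M \<in> gen_algebra G"
| one: "mat 1 \<in> gen_algebra G"
| add: "M \<in> gen_algebra G \<Longrightarrow> N \<in> gen_algebra G \<Longrightarrow> M + N \<in> gen_algebra G"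
| scale: "M \<in> gen_algebra G \<Longrightarrow> cmat_scale a M \<in> gen_algebra G"
| mult: "M \<in> gen_algebra G \<Longrightarrow> N \<in> gen_algebra G \<Longrightarrow> M ** N \<in> gen_algebra G"

definition terwilliger :: "('n::finite \<Rightarrow> 'n \<Rightarrow> bool) \<Rightarrow> 'n \<Rightarrow> (complex^'n^'n) set" where
  "terwilliger E x = gen_algebra (insert (adj_matrix E) (dual_idempotent E x ` {0..3}))"

end

theory Submission
  imports Defs
begin


lemma card_partition:
  fixes A :: "'a set" and f :: "'a \<Rightarrow> 'b"
  assumes "finite A" "finite H" "f ` A \<subseteq> H"
  shows "card A = (\<Sum>h\<in>H. card {a\<in>A. f a = h})"
proof -
  have "A = (\<Union>h\<in>H. {a\<in>A. f a = h})" using assms(3) by auto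
  then have "card A = card (\<Union>h\<in>H. {a\<in>A. f a = h})" by simp
  also have "\<dots> = (\<Sum>h\<in>H. card {a\<in>A. f a = h})"
    by (rule card_UN_disjoint) (use assms in auto)
  finally show ?thesis .
qed

locale tay =
  fixes E :: "'n::finite \<Rightarrow> 'n \<Rightarrow> bool" and k bb :: nat
  assumes bk: "bb < k - 1"
  and drg: "distance_regular E 3 (\<lambda>i. [k,bb,1]!i) (\<lambda>i. [0,1,bb,k]!i)"
begin

abbreviation d where "d \<equiv> gdist E"

lemma sg: "simple_graph E" using drg unfolding distance_regular_def by auto
lemma Esym: "E u v \<Longrightarrow> E v u" using sg unfolding simple_graph_def by auto
lemma Eirr: "\<not> E u u" using sg unfolding simple_graph_def by auto
lemma conn: "\<exists>i. (E ^^ i) u v" using drg unfolding distance_regular_def connected_graph_def by auto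
lemma dle3: "d u v \<le> 3" using drg unfolding distance_regular_def by auto
lemma ex3: "\<exists>u v. d u v = 3" using drg unfolding distance_regular_def by auto
lemma bcount: "d u v < 3 \<Longrightarrow> card {z. d u z = d u v + 1 \<and> E v z} = [k,bb,1] ! (d u v)"
  using drg unfolding distance_regular_def Let_def by auto
lemma ccount: "1 \<le> d u v \<Longrightarrow> card {z. d u z = d u v - 1 \<and> E v z} = [0,1,bb,k] ! (d u v)"
  using drg unfolding distance_regular_def Let_def by auto

lemma relpow_sym: "(E ^^ n) u v \<Longrightarrow> (E ^^ n) v u"
proof (induction n arbitrary: u v)
  case 0 then show ?case by simp
next
  case (Suc n)
  then obtain w where "(E ^^ n) u w" "E w v" by (auto elim: relpowp_Suc_E)
  then have "(E ^^ n) w u" "E v w" using Suc.IH Esym by auto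
  then show ?case by (meson relpowp_Suc_I2)
qed

lemma d_reach: "(E ^^ d u v) u v"
  unfolding gdist_def using conn by (rule LeastI_ex)

lemma d_min: "(E ^^ n) u v \<Longrightarrow> d u v \<le> n"
  unfolding gdist_def by (rule Least_le)

lemma dsym: "d u v = d v u"
  using d_min[OF relpow_sym[OF d_reach[of u v]]] d_min[OF relpow_sym[OF d_reach[of v u]]] by simp

lemma d0: "d u v = 0 \<longleftrightarrow> u = v"
proof
  assume "d u v = 0" then show "u = v" using d_reach[of u v] by simp
next
  assume "u = v" then show "d u v = 0" using d_min[of 0 u v] by simp
qed

lemma d_self[simp]: "d u u = 0" using d0 by simp

lemma d1: "d u v = 1 \<longleftrightarrow> E u v"
proof
  assume "d u v = 1" then show "E u v" using d_reach[of u v] by (metis relpowp_1)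
next
  assume "E u v"
  then have "d u v \<le> 1" using d_min[of 1 u v] by (metis relpowp_1)
  moreover have "u \<noteq> v" using \<open>E u v\<close> Eirr by auto
  ultimately show "d u v = 1" using d0[of u v] by linarith
qed

lemma d_step: "E v w \<Longrightarrow> d u w \<le> d u v + 1"
  using d_min[OF relpowp_Suc_I[OF d_reach[of u v]]] by simp

lemma d_step2: "E v w \<Longrightarrow> d u v \<le> d u w + 1"
  using d_step[of w v u] Esym by blast

lemma d_path: "d u v = Suc n \<Longrightarrow> \<exists>w. E w v \<and> d u w = n"
proof -
  assume a: "d u v = Suc n"
  from d_reach[of u v] a obtain w where w: "(E ^^ n) u w" "E w v" by (auto elim: relpowp_Suc_E)
  have "d u w \<le> n" using d_min[OF w(1)] .
  moreover have "d u v \<le> d u w + 1" using d_step[OF w(2)] .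
  ultimately show ?thesis using a w by (intro exI[of _ w]) auto
qed

lemma reg: "card {z. E v z} = k"
proof -
  have "{z. d v z = d v v + 1 \<and> E v z} = {z. E v z}" using d1 by auto
  then show ?thesis using bcount[of v v] by simp
qed

lemma k_pos: "k \<ge> 2" using bk by linarith

lemma bb_pos: "bb \<ge> 1"
proof -
  obtain u v where "d u v = 3" using ex3 by blast
  then obtain w where w: "E w v" "d u w = 2" using d_path[of u v 2] by auto
  then obtain z where z: "E z w" "d u z = 1" using d_path[of u w 1] by auto
  have "card {z. d u z = d u w - 1 \<and> E w z} = bb" using ccount[of u w] w by simp
  moreover have "z \<in> {z. d u z = d u w - 1 \<and> E w z}" using z w Esym by auto
  ultimately show ?thesis by (metis card_0_eq empty_iff finite less_one not_less)
qed


lemma nbr_range: "E y w \<Longrightarrow> d z w + 1 \<ge> d z y \<and> d z w \<le> d z y + 1"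
  using d_step[of y w z] d_step2[of y w z] by simp

lemma S_plus: "card {w. E y w \<and> d z w = d z y + 1} = (if d z y < 3 then [k,bb,1] ! d z y else 0)"
proof (cases "d z y < 3")
  case True
  have "{w. E y w \<and> d z w = d z y + 1} = {w. d z w = d z y + 1 \<and> E y w}" by auto
  then show ?thesis using bcount[of z y] True by simp
next
  case False
  have "d z w \<noteq> d z y + 1" for w using dle3[of z w] False by linarith
  then have "{w. E y w \<and> d z w = d z y + 1} = {}" by auto
  then show ?thesis using False by simp
qed

lemma S_minus: "d z y \<ge> 1 \<Longrightarrow> card {w. E y w \<and> d z w = d z y - 1} = [0,1,bb,k] ! d z y"
proof -
  assume a: "d z y \<ge> 1"
  have "{w. E y w \<and> d z w = d z y - 1} = {w. d z w = d z y - 1 \<and> E y w}" by auto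
  then show ?thesis using ccount[OF a] by simp
qed

lemma S_total: "d z y \<ge> 1 \<Longrightarrow> card {w. E y w \<and> d z w = d z y - 1} + card {w. E y w \<and> d z w = d z y}
   + card {w. E y w \<and> d z w = d z y + 1} = k"
proof -
  assume a: "d z y \<ge> 1"
  let ?l = "d z y"
  have img: "d z ` {w. E y w} \<subseteq> {?l-1,?l,?l+1}"
  proof
    fix t assume "t \<in> d z ` {w. E y w}"
    then obtain w where w: "E y w" "t = d z w" by auto
    then have "d z w = ?l-1 \<or> d z w = ?l \<or> d z w = ?l+1" using nbr_range[of y w z] a by linarith
    then show "t \<in> {?l-1,?l,?l+1}" using w by auto
  qed
  have "card {w. E y w} = (\<Sum>h\<in>{?l-1, ?l, ?l+1}. card {w\<in>{w. E y w}. d z w = h})"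
    by (rule card_partition) (use img in auto)
  also have "\<dots> = card {w. E y w \<and> d z w = d z y - 1} + card {w. E y w \<and> d z w = d z y}
   + card {w. E y w \<and> d z w = d z y + 1}"
  proof -
    have "?l - 1 \<notin> {?l, ?l+1}" "?l \<notin> {?l+1}" using a by auto
    then show ?thesis by (simp add: add.assoc)
  qed
  finally show ?thesis using reg[of y] by simp
qed

lemma S_other: "b + 1 < d z y \<or> b > d z y + 1 \<Longrightarrow> card {w. E y w \<and> d z w = b} = 0"
proof -
  assume "b + 1 < d z y \<or> b > d z y + 1"
  then have "{w. E y w \<and> d z w = b} = {}" using nbr_range[of y _ z] by fastforce
  then show ?thesis by simp
qed

lemma pdet: "d z y = d z2 y2 \<Longrightarrow> card {w. E y w \<and> d z w = b} = card {w. E y2 w \<and> d z2 w = b}"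
proof -
  assume eq: "d z y = d z2 y2"
  show ?thesis
  proof (cases "d z y = 0")
    case True
    then have "y = z" "y2 = z2" using eq d0 by (auto simp: dsym)
    moreover have "{w. E z w \<and> d z w = b} = (if b = 1 then {w. E z w} else {})" for z
      using d1 by auto
    ultimately show ?thesis by (simp add: reg)
  next
    case False
    then have a: "d z y \<ge> 1" "d z2 y2 \<ge> 1" using eq by auto
    consider "b + 1 < d z y \<or> b > d z y + 1" | "b = d z y - 1" | "b = d z y" | "b = d z y + 1" by linarith
    then show ?thesis
    proof cases
      case 1
      then have "card {w. E y w \<and> d z w = b} = 0" by (rule S_other)
      moreover have "card {w. E y2 w \<and> d z2 w = b} = 0" using 1 eq by (intro S_other) simp
      ultimately show ?thesis by linarith
    next
      case 2 then show ?thesis using S_minus[OF a(1)] S_minus[OF a(2)] eq by simp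
    next
      case 3
      have p: "card {w. E y w \<and> d z w = d z y + 1} = card {w. E y2 w \<and> d z2 w = d z2 y2 + 1}"
        using S_plus[of y z] S_plus[of y2 z2] eq by simp
      have m: "card {w. E y w \<and> d z w = d z y - 1} = card {w. E y2 w \<and> d z2 w = d z2 y2 - 1}"
        using S_minus[OF a(1)] S_minus[OF a(2)] eq by simp
      have "card {w. E y w \<and> d z w = d z y} = card {w. E y2 w \<and> d z2 w = d z2 y2}"
        using S_total[OF a(1)] S_total[OF a(2)] p m by linarith
      then show ?thesis using 3 eq by simp
    next
      case 4 then show ?thesis using S_plus[of y z] S_plus[of y2 z2] eq by simp
    qed
  qed
qed

lemma fwd: "i \<le> 3 \<Longrightarrow> \<exists>v. d u v = i"
proof (induction i)
  case 0 then show ?case by (metis d_self)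
next
  case (Suc i)
  then obtain v where v: "d u v = i" by auto
  have pos: "[k,bb,1] ! i > 0" using Suc.prems k_pos bb_pos
    by (cases i; cases "i - 1"; auto)
  have "card {z. d u z = d u v + 1 \<and> E v z} > 0" using bcount[of u v] v Suc.prems pos by simp
  then have "{z. d u z = d u v + 1 \<and> E v z} \<noteq> {}" by (metis card.empty less_irrefl)
  then obtain z where "d u z = d u v + 1" by auto
  then show ?case using v by auto
qed

lemma card_G1: "card {y. d u y = 1} = k"
  using reg[of u] d1 by simp

lemma card_G2: "card {z. d u z = 2} = k"
proof -
  let ?G1 = "{y. d u y = 1}" and ?G2 = "{z. d u z = 2}"
  let ?P = "SIGMA y:?G1. {z. d u z = 2 \<and> E y z}"
  have c1: "card ?P = k * bb"
  proof -
    have "card ?P = (\<Sum>y\<in>?G1. card {z. d u z = 2 \<and> E y z})" by simp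
    also have "\<dots> = (\<Sum>y\<in>?G1. bb)"
    proof (rule sum.cong)
      fix y assume "y \<in> ?G1"
      then show "card {z. d u z = 2 \<and> E y z} = bb" using bcount[of u y] by (simp add: numeral_2_eq_2)
    qed simp
    finally show ?thesis using card_G1 by simp
  qed
  let ?Q = "SIGMA z:?G2. {y. d u y = 1 \<and> E z y}"
  have "?P = (\<lambda>(z,y). (y,z)) ` ?Q" using Esym by auto
  moreover have "inj_on (\<lambda>(z,y). (y,z)) ?Q" by (auto simp: inj_on_def)
  ultimately have "card ?P = card ?Q" by (simp add: card_image)
  also have "card ?Q = (\<Sum>z\<in>?G2. card {y. d u y = 1 \<and> E z y})" by simp
  also have "\<dots> = (\<Sum>z\<in>?G2. bb)"
  proof (rule sum.cong)
    fix z assume "z \<in> ?G2"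
    then show "card {y. d u y = 1 \<and> E z y} = bb" using ccount[of u z] by simp
  qed simp
  finally have "card ?G2 * bb = k * bb" using c1 by simp
  then show ?thesis using bb_pos by simp
qed

lemma far_nbrs: "d u v = 3 \<Longrightarrow> {z. E v z} = {z. d u z = 2}"
proof -
  assume a: "d u v = 3"
  have c: "card {z. d u z = 2 \<and> E v z} = k" using ccount[of u v] a by simp
  have "{z. d u z = 2 \<and> E v z} = {z. E v z}"
    by (rule card_subset_eq) (use c reg[of v] in auto)
  then have sub: "{z. E v z} \<subseteq> {z. d u z = 2}" by auto
  show ?thesis by (rule card_subset_eq) (use sub reg[of v] card_G2[of u] in auto)
qed

lemma far_unique: "d u v = 3 \<Longrightarrow> d u v' = 3 \<Longrightarrow> v = v'"
proof -
  assume a: "d u v = 3" "d u v' = 3"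
  obtain w where w: "d u w = 2" using fwd[of 2 u] by auto
  then have "E v w" "E v' w" using far_nbrs[OF a(1)] far_nbrs[OF a(2)] by auto
  then have "v \<in> {z. d u z = d u w + 1 \<and> E w z}" "v' \<in> {z. d u z = d u w + 1 \<and> E w z}"
    using a w Esym by auto
  moreover have "card {z. d u z = d u w + 1 \<and> E w z} = 1" using bcount[of u w] w by simp
  ultimately show ?thesis by (metis card_1_singletonE singletonD)
qed

definition sig where "sig u = (THE v. d u v = 3)"

lemma sig3: "d u (sig u) = 3"
proof -
  obtain v where "d u v = 3" using fwd[of 3 u] by auto
  then show ?thesis unfolding sig_def
    by (rule theI[of _ v]) (use \<open>d u v = 3\<close> far_unique in blast)
qed

lemma sig_uniq: "d u v = 3 \<Longrightarrow> v = sig u"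
  using far_unique sig3 by blast

lemma sig_sig: "sig (sig u) = u"
  using sig_uniq[of "sig u" u] sig3[of u] dsym[of u "sig u"] by simp

lemma d_sig: "d w (sig u) = 3 - d w u"
proof -
  consider "d w u = 0" | "d w u = 1" | "d w u = 2" | "d w u = 3" using dle3[of w u] by linarith
  then show ?thesis
  proof cases
    case 1 then have "w = u" using d0 by blast
    then show ?thesis using 1 sig3[of u] by simp
  next
    case 2
    have "d u w = 1" using 2 dsym[of u w] by simp
    have "E (sig u) w \<Longrightarrow> d u w = 2" using far_nbrs[OF sig3[of u]] by (simp add: set_eq_iff)
    then have "\<not> E (sig u) w" using \<open>d u w = 1\<close> by auto
    then have n1: "d w (sig u) \<noteq> 1" using d1 Esym by blast
    have n0: "d w (sig u) \<noteq> 0"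
    proof
      assume "d w (sig u) = 0"
      then have "w = sig u" using d0 by blast
      then show False using 2 sig3[of u] dsym[of u "sig u"] by simp
    qed
    have n3: "d w (sig u) \<noteq> 3"
    proof
      assume "d w (sig u) = 3"
      then have "d (sig u) w = 3" using dsym[of w "sig u"] by simp
      then have "w = sig (sig u)" by (rule sig_uniq)
      then show False using 2 sig_sig by simp
    qed
    show ?thesis using n0 n1 n3 dle3[of w "sig u"] 2 by linarith
  next
    case 3
    then have "d u w = 2" using dsym[of u w] by simp
    then have "E (sig u) w" using far_nbrs[OF sig3[of u]] by (simp add: set_eq_iff)
    then have "E w (sig u)" by (rule Esym)
    then have "d w (sig u) = 1" using d1 by blast
    then show ?thesis using 3 by simp
  next
    case 4
    then have "d u w = 3" using dsym[of u w] by simp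
    then have "w = sig u" by (rule sig_uniq)
    then show ?thesis using 4 by simp
  qed
qed

lemma d_sig2: "d (sig u) w = 3 - d u w"
proof -
  have "d (sig u) w = d w (sig u)" by (rule dsym)
  also have "\<dots> = 3 - d w u" by (rule d_sig)
  also have "d w u = d u w" by (rule dsym)
  finally show ?thesis .
qed

lemma d_sig_sig: "d (sig u) (sig v) = d u v"
proof -
  have 1: "d (sig u) (sig v) = 3 - d (sig u) v" by (rule d_sig)
  have 2: "d (sig u) v = 3 - d u v" by (rule d_sig2)
  show ?thesis unfolding 1 2 using dle3[of u v] by arith
qed

lemma E_sig: "E (sig u) (sig v) \<longleftrightarrow> E u v"
  using d_sig_sig[of u v] d1[of u v] d1[of "sig u" "sig v"] by metis

lemma inj_sig: "inj sig"
proof (rule injI)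
  fix a b assume "sig a = sig b"
  then have "sig (sig a) = sig (sig b)" by simp
  then show "a = b" by (simp add: sig_sig)
qed

lemma card_sig: "card {w. P w} = card {v. P (sig v)}"
proof -
  have "{w. P w} = sig ` {v. P (sig v)}"
  proof
    show "{w. P w} \<subseteq> sig ` {v. P (sig v)}"
    proof
      fix w assume "w \<in> {w. P w}"
      then have "sig w \<in> {v. P (sig v)}" by (simp add: sig_sig)
      then show "w \<in> sig ` {v. P (sig v)}" by (metis image_eqI sig_sig)
    qed
  qed auto
  moreover have "inj_on sig {v. P (sig v)}" using inj_sig by (simp add: inj_on_def inj_def)
  ultimately show ?thesis using card_image by metis
qed

end


context tay begin

definition N where "N x y z h b = card {w. E y w \<and> d x w = h \<and> d z w = b}"

lemma E_d1: "E u v \<longleftrightarrow> d u v = 1" using d1 by simp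

lemma RY: "h \<le> 3 \<Longrightarrow> b \<le> 3 \<Longrightarrow> N x (sig u) z h b = N x u z (3-h) (3-b)"
proof -
  assume hb: "h \<le> 3" "b \<le> 3"
  have "N x (sig u) z h b = card {v. E (sig u) (sig v) \<and> d x (sig v) = h \<and> d z (sig v) = b}"
    unfolding N_def by (rule card_sig)
  also have "{v. E (sig u) (sig v) \<and> d x (sig v) = h \<and> d z (sig v) = b} = {v. E u v \<and> d x v = 3-h \<and> d z v = 3-b}"
  proof -
    have "E (sig u) (sig v) \<and> d x (sig v) = h \<and> d z (sig v) = b \<longleftrightarrow> E u v \<and> d x v = 3-h \<and> d z v = 3-b" for v
      using E_sig[of u v] d_sig[of x v] d_sig[of z v] dle3[of x v] dle3[of z v] hb by auto
    then show ?thesis by blast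
  qed
  finally show ?thesis unfolding N_def .
qed

lemma RZ: "b \<le> 3 \<Longrightarrow> N x y (sig u) h b = N x y u h (3-b)"
proof -
  assume hb: "b \<le> 3"
  have "E y w \<and> d x w = h \<and> d (sig u) w = b \<longleftrightarrow> E y w \<and> d x w = h \<and> d u w = 3-b" for w
    using d_sig2[of u w] dle3[of u w] hb by auto
  then show ?thesis unfolding N_def by presburger
qed

lemma part_h: "d x y = 1 \<Longrightarrow> card {w. E y w \<and> d z w = b} = N x y z 0 b + N x y z 1 b + N x y z 2 b"
proof -
  assume a: "d x y = 1"
  have img: "d x ` {w. E y w \<and> d z w = b} \<subseteq> {0,1,2}"
  proof
    fix t assume "t \<in> d x ` {w. E y w \<and> d z w = b}"
    then obtain w where w: "E y w" "t = d x w" by auto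
    then have "d x w \<le> 2" using d_step[of y w x] a by simp
    then show "t \<in> {0,1,2}" using w by auto
  qed
  have "card {w. E y w \<and> d z w = b} = (\<Sum>h\<in>{0,1,2}. card {w\<in>{w. E y w \<and> d z w = b}. d x w = h})"
    by (rule card_partition) (use img in auto)
  also have "\<dots> = N x y z 0 b + N x y z 1 b + N x y z 2 b"
    unfolding N_def by (simp add: conj_commute conj_left_commute)
  finally show ?thesis .
qed

lemma part_b: "d x y = 1 \<Longrightarrow> d x z = 1 \<Longrightarrow> card {w. E y w \<and> d x w = 1} = N x y z 1 0 + N x y z 1 1 + N x y z 1 2"
proof -
  assume a: "d x y = 1" "d x z = 1"
  have img: "d z ` {w. E y w \<and> d x w = 1} \<subseteq> {0,1,2}"
  proof
    fix t assume "t \<in> d z ` {w. E y w \<and> d x w = 1}"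
    then obtain w where w: "E y w" "d x w = 1" "t = d z w" by auto
    then have "E x w" using d1 by blast
    then have "d z w \<le> d z x + 1" by (rule d_step)
    then have "d z w \<le> 2" using a(2) dsym[of z x] by simp
    then show "t \<in> {0,1,2}" using w by auto
  qed
  have "card {w. E y w \<and> d x w = 1} = (\<Sum>h\<in>{0,1,2}. card {w\<in>{w. E y w \<and> d x w = 1}. d z w = h})"
    by (rule card_partition) (use img in auto)
  also have "\<dots> = N x y z 1 0 + N x y z 1 1 + N x y z 1 2"
    unfolding N_def by (simp add: conj_commute conj_left_commute)
  finally show ?thesis .
qed

lemma N_h0: "d x y = 1 \<Longrightarrow> d x z = 1 \<Longrightarrow> N x y z 0 b = (if b = 1 then 1 else 0)"
proof -
  assume a: "d x y = 1" "d x z = 1"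
  have "E y x" using a(1) d1 Esym by blast
  have "d z x = 1" using a(2) dsym[of z x] by simp
  have "{w. E y w \<and> d x w = 0 \<and> d z w = b} = (if b = 1 then {x} else {})"
    using \<open>E y x\<close> \<open>d z x = 1\<close> d0[of x] by auto
  then show ?thesis unfolding N_def by simp
qed

lemma N_h3: "d x y = 1 \<Longrightarrow> N x y z 3 b = 0"
proof -
  assume a: "d x y = 1"
  have "{w. E y w \<and> d x w = 3 \<and> d z w = b} = {}"
    using d_step[of y _ x] a by fastforce
  then show ?thesis unfolding N_def by simp
qed

lemma N_b0: "d x z = 1 \<Longrightarrow> N x y z 1 0 = (if E y z then 1 else 0)"
proof -
  assume a: "d x z = 1"
  have "{w. E y w \<and> d x w = 1 \<and> d z w = 0} = (if E y z then {z} else {})"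
    using a d0[of z] by auto
  then show ?thesis unfolding N_def by simp
qed

lemma N_b3: "d x z = 1 \<Longrightarrow> b \<ge> 3 \<Longrightarrow> N x y z 1 b = 0"
proof -
  assume a: "d x z = 1" "b \<ge> 3"
  have "d z w \<le> 2" if "d x w = 1" for w
  proof -
    have "E x w" using that d1 by blast
    then have "d z w \<le> d z x + 1" by (rule d_step)
    then show ?thesis using a(1) dsym[of z x] by simp
  qed
  then have "{w. E y w \<and> d x w = 1 \<and> d z w = b} = {}" using a(2) by fastforce
  then show ?thesis unfolding N_def by simp
qed

lemma N_sym11: "N x y z 1 1 = N x z y 1 1"
proof -
  have "E y w \<and> d x w = 1 \<and> d z w = 1 \<longleftrightarrow> E z w \<and> d x w = 1 \<and> d y w = 1" for w
    using d1[of y w] d1[of z w] d1[of w y] d1[of w z] dsym[of y w] dsym[of z w] by auto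
  then show ?thesis unfolding N_def by presburger
qed

lemma N_beta: "N x y z 2 2 = N x z y 1 2"
proof -
  have "N x y z 2 2 = card {v. E y (sig v) \<and> d x (sig v) = 2 \<and> d z (sig v) = 2}"
    unfolding N_def by (rule card_sig)
  also have "{v. E y (sig v) \<and> d x (sig v) = 2 \<and> d z (sig v) = 2} = {v. E z v \<and> d x v = 1 \<and> d y v = 2}"
  proof -
    have "E y (sig v) \<and> d x (sig v) = 2 \<and> d z (sig v) = 2 \<longleftrightarrow> E z v \<and> d x v = 1 \<and> d y v = 2" for v
      using d1[of y "sig v"] d1[of z v] d_sig[of x v] d_sig[of z v] d_sig[of y v]
        dle3[of x v] dle3[of z v] dle3[of y v] by auto
    then show ?thesis by blast
  qed
  finally show ?thesis unfolding N_def .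
qed

lemma MID: assumes "d x y = 1" "d x z = 1" "d x y2 = 1" "d x z2 = 1" "d y z = d y2 z2"
  and "h \<le> 3" "b \<le> 3"
  shows "N x y z h b = N x y2 z2 h b"
proof -
  have key: "2 * N x p q 1 2 = card {w. E p w \<and> d q w = 2}" if "d x p = 1" "d x q = 1" for p q
  proof -
    have s1: "card {w. E p w \<and> d x w = 1} = card {w. E q w \<and> d x w = 1}" by (rule pdet) (use that in simp)
    have "N x p q 1 0 = N x q p 1 0" using N_b0[of x q p] N_b0[of x p q] that Esym by auto
    then have "N x q p 1 2 = N x p q 1 2"
      using part_b[of x p q] part_b[of x q p] that s1 N_sym11[of x p q] by linarith
    then show ?thesis using part_h[of x p q 2] that N_h0[of x p q 2] N_beta[of x p q] by simp
  qed
  have pe: "card {w. E y w \<and> d z w = b'} = card {w. E y2 w \<and> d z2 w = b'}" for b'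
    by (rule pdet) (use assms(5) dsym in metis)
  have a2: "N x y z 1 2 = N x y2 z2 1 2" using key[of y z] key[of y2 z2] assms(1-4) pe[of 2] by simp
  have a0: "N x y z 1 0 = N x y2 z2 1 0" using N_b0[of x z y] N_b0[of x z2 y2] assms(2,4,5) E_d1 by simp
  have s1: "card {w. E y w \<and> d x w = 1} = card {w. E y2 w \<and> d x w = 1}" by (rule pdet) (use assms in simp)
  have a1: "N x y z 1 1 = N x y2 z2 1 1" using part_b[of x y z] part_b[of x y2 z2] assms(1-4) s1 a0 a2 by linarith
  have a3: "N x y z 1 3 = N x y2 z2 1 3" using N_b3[of x z 3 y] N_b3[of x z2 3 y2] assms(2,4) by simp
  have alpha: "N x y z 1 b = N x y2 z2 1 b" using a0 a1 a2 a3 assms(7)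
    by (cases b; cases "b - 1"; cases "b - 2"; auto simp: numeral_3_eq_3 numeral_2_eq_2)
  have h0: "N x y z 0 b = N x y2 z2 0 b" using N_h0[of x y z b] N_h0[of x y2 z2 b] assms(1-4) by simp
  have h2: "N x y z 2 b = N x y2 z2 2 b" using part_h[of x y z b] part_h[of x y2 z2 b] assms(1,3) pe[of b] h0 alpha by linarith
  have h3: "N x y z 3 b = N x y2 z2 3 b" using N_h3[of x y z b] N_h3[of x y2 z2 b] assms(1,3) by simp
  show ?thesis using h0 alpha h2 h3 assms(6)
    by (cases h; cases "h - 1"; cases "h - 2"; auto simp: numeral_3_eq_3 numeral_2_eq_2)
qed

end


context tay begin

lemma flipY: assumes "\<forall>h\<le>3. \<forall>b\<le>3. N x (sig y) z h b = N x (sig y2) z2 h b"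
  shows "\<forall>h\<le>3. \<forall>b\<le>3. N x y z h b = N x y2 z2 h b"
proof (intro allI impI)
  fix h b :: nat assume hb: "h \<le> 3" "b \<le> 3"
  have "N x y z h b = N x (sig (sig y)) z h b" by (simp add: sig_sig)
  also have "\<dots> = N x (sig y) z (3-h) (3-b)" using RY hb by blast
  also have "\<dots> = N x (sig y2) z2 (3-h) (3-b)" using assms by simp
  also have "\<dots> = N x (sig (sig y2)) z2 h b" using RY[of h b x "sig y2" z2] hb by simp
  also have "\<dots> = N x y2 z2 h b" by (simp add: sig_sig)
  finally show "N x y z h b = N x y2 z2 h b" .
qed

lemma flipZ: assumes "\<forall>h\<le>3. \<forall>b\<le>3. N x y (sig z) h b = N x y2 (sig z2) h b"
  shows "\<forall>h\<le>3. \<forall>b\<le>3. N x y z h b = N x y2 z2 h b"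
proof (intro allI impI)
  fix h b :: nat assume hb: "h \<le> 3" "b \<le> 3"
  have "N x y z h b = N x y (sig (sig z)) h b" by (simp add: sig_sig)
  also have "\<dots> = N x y (sig z) h (3-b)" using RZ hb by blast
  also have "\<dots> = N x y2 (sig z2) h (3-b)" using assms hb by simp
  also have "\<dots> = N x y2 (sig (sig z2)) h b" using RZ[of b x y2 "sig z2" h] hb by simp
  also have "\<dots> = N x y2 z2 h b" by (simp add: sig_sig)
  finally show "N x y z h b = N x y2 z2 h b" .
qed

lemma dx_sig: "d x (sig u) = 3 - d x u" by (rule d_sig)

lemma Nmid: assumes "d x y = d x y2" "d x z = d x z2" "d y z = d y2 z2"
  and "d x y \<in> {1,2}" "d x z \<in> {1,2}"
  shows "\<forall>h\<le>3. \<forall>b\<le>3. N x y z h b = N x y2 z2 h b"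
proof -
  have M: "\<forall>h\<le>3. \<forall>b\<le>3. N x p q h b = N x p2 q2 h b"
    if "d x p = 1" "d x q = 1" "d x p2 = 1" "d x q2 = 1" "d p q = d p2 q2" for p q p2 q2
    using MID[OF that] by blast
  consider "d x y = 1" "d x z = 1" | "d x y = 2" "d x z = 1" | "d x y = 1" "d x z = 2" | "d x y = 2" "d x z = 2"
    using assms(4,5) by auto
  then show ?thesis
  proof cases
    case 1 then show ?thesis using M[of y z y2 z2] assms by simp
  next
    case 2
    have "d (sig y) z = d (sig y2) z2" using d_sig2[of y z] d_sig2[of y2 z2] assms(3) by simp
    then have "\<forall>h\<le>3. \<forall>b\<le>3. N x (sig y) z h b = N x (sig y2) z2 h b"
      using M[of "sig y" z "sig y2" z2] 2 assms(1,2) dx_sig[of x y] dx_sig[of x y2] by simp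
    then show ?thesis by (rule flipY)
  next
    case 3
    have "d y (sig z) = d y2 (sig z2)" using d_sig[of y z] d_sig[of y2 z2] assms(3) by simp
    then have "\<forall>h\<le>3. \<forall>b\<le>3. N x y (sig z) h b = N x y2 (sig z2) h b"
      using M[of y "sig z" y2 "sig z2"] 3 assms(1,2) dx_sig[of x z] dx_sig[of x z2] by simp
    then show ?thesis by (rule flipZ)
  next
    case 4
    have "d (sig y) (sig z) = d (sig y2) (sig z2)" using d_sig_sig[of y z] d_sig_sig[of y2 z2] assms(3) by simp
    then have "\<forall>h\<le>3. \<forall>b\<le>3. N x (sig y) (sig z) h b = N x (sig y2) (sig z2) h b"
      using M[of "sig y" "sig z" "sig y2" "sig z2"] 4 assms(1,2) dx_sig[of x y] dx_sig[of x y2]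
        dx_sig[of x z] dx_sig[of x z2] by simp
    then have "\<forall>h\<le>3. \<forall>b\<le>3. N x (sig y) z h b = N x (sig y2) z2 h b" by (rule flipZ)
    then show ?thesis by (rule flipY)
  qed
qed

lemma Ndet: assumes "d x y = d x y2" "d x z = d x z2" "d y z = d y2 z2" "h \<le> 3" "b \<le> 3"
  shows "N x y z h b = N x y2 z2 h b"
proof -
  consider "d x y = 0" | "d x y = 3" | "d x z = 0" | "d x z = 3" | "d x y \<in> {1,2}" "d x z \<in> {1,2}"
    using dle3[of x y] dle3[of x z] by force
  then show ?thesis
  proof cases
    case 1
    then have yy: "y = x" "y2 = x" using assms(1) d0 by (metis, metis)
    have f: "N x x q h b = (if h = 1 then card {w. E x w \<and> d q w = b} else 0)" for q
    proof -
      have "{w. E x w \<and> d x w = h \<and> d q w = b} = (if h = 1 then {w. E x w \<and> d q w = b} else {})"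
        using d1[of x] by auto
      then show ?thesis unfolding N_def by simp
    qed
    have "d z x = d z2 x" using assms(2) dsym by metis
    then have "card {w. E x w \<and> d z w = b} = card {w. E x w \<and> d z2 w = b}" by (rule pdet)
    then show ?thesis using f[of z] f[of z2] yy by simp
  next
    case 2
    then have yy: "y = sig x" "y2 = sig x" using assms(1) sig_uniq by (metis, metis)
    have f: "N x (sig x) q h b = (if h = 2 then card {w. E (sig x) w \<and> d q w = b} else 0)" for q
    proof -
      have "E (sig x) w \<Longrightarrow> d x w = 2" for w using far_nbrs[OF sig3[of x]] by (simp add: set_eq_iff)
      then have "{w. E (sig x) w \<and> d x w = h \<and> d q w = b} = (if h = 2 then {w. E (sig x) w \<and> d q w = b} else {})"
        by auto
      then show ?thesis unfolding N_def by simp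
    qed
    have "d z y = d z2 y2" using assms(3) dsym by metis
    then have "card {w. E (sig x) w \<and> d z w = b} = card {w. E (sig x) w \<and> d z2 w = b}" using yy by (metis pdet)
    then show ?thesis using f[of z] f[of z2] yy by simp
  next
    case 3
    then have zz: "z = x" "z2 = x" using assms(2) d0 by (metis, metis)
    have f: "N x p x h b = (if h = b then card {w. E p w \<and> d x w = h} else 0)" for p
    proof -
      have "{w. E p w \<and> d x w = h \<and> d x w = b} = (if h = b then {w. E p w \<and> d x w = h} else {})"
        by auto
      then show ?thesis unfolding N_def by simp
    qed
    have "card {w. E y w \<and> d x w = h} = card {w. E y2 w \<and> d x w = h}" using assms(1) by (rule pdet)
    then show ?thesis using f[of y] f[of y2] zz by (cases "h = b") auto
  next
    case 4
    then have zz: "z = sig x" "z2 = sig x" using assms(2) sig_uniq by (metis, metis)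
    have f: "N x p (sig x) h b = (if b = 3 - h then card {w. E p w \<and> d x w = h} else 0)" for p
    proof -
      have "{w. E p w \<and> d x w = h \<and> d (sig x) w = b} = (if b = 3 - h then {w. E p w \<and> d x w = h} else {})"
        using d_sig2[of x] assms(4,5) by auto
      then show ?thesis unfolding N_def by simp
    qed
    have "card {w. E y w \<and> d x w = h} = card {w. E y2 w \<and> d x w = h}" using assms(1) by (rule pdet)
    then show ?thesis using f[of y] f[of y2] zz by simp
  next
    case 5
    then show ?thesis using Nmid[OF assms(1-3)] assms(4,5) by blast
  qed
qed

end


lemma mult_entry: "(M ** N) $ y $ z = (\<Sum>w\<in>UNIV. M $ y $ w * N $ w $ z)"
  by (simp add: matrix_matrix_mult_def)

lemma scale_entry: "cmat_scale a M $ y $ z = a * M $ y $ z"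
  by (simp add: cmat_scale_def)

lemma adj_entry: "adj_matrix E $ y $ z = (if E y z then 1 else 0)"
  by (simp add: adj_matrix_def)

lemma dual_entry: "dual_idempotent E x i $ y $ z = (if y = z \<and> gdist E x y = i then 1 else 0)"
  by (simp add: dual_idempotent_def)

lemma sum_if_card: "(\<Sum>w\<in>(UNIV::'a::finite set). if P w then c else 0) = of_nat (card {w. P w}) * (c::complex)"
  by (simp add: sum.If_cases)

definition Bset :: "('n::finite \<Rightarrow> 'n \<Rightarrow> bool) \<Rightarrow> 'n \<Rightarrow> (complex^'n^'n) set" where
  "Bset E x = {M. \<exists>f. \<forall>y z. M $ y $ z = f (gdist E x y) (gdist E x z) (gdist E y z)}"

lemma Bset_add: "M \<in> Bset E x \<Longrightarrow> N \<in> Bset E x \<Longrightarrow> M + N \<in> Bset E x"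
proof -
  assume "M \<in> Bset E x" "N \<in> Bset E x"
  then obtain f g where "\<forall>y z. M $ y $ z = f (gdist E x y) (gdist E x z) (gdist E y z)"
    "\<forall>y z. N $ y $ z = g (gdist E x y) (gdist E x z) (gdist E y z)" unfolding Bset_def by blast
  then show ?thesis unfolding Bset_def
    by (intro CollectI exI[of _ "\<lambda>i j l. f i j l + g i j l"]) simp
qed

lemma Bset_scale: "M \<in> Bset E x \<Longrightarrow> cmat_scale a M \<in> Bset E x"
proof -
  assume "M \<in> Bset E x"
  then obtain f where "\<forall>y z. M $ y $ z = f (gdist E x y) (gdist E x z) (gdist E y z)"
    unfolding Bset_def by blast
  then show ?thesis unfolding Bset_def
    by (intro CollectI exI[of _ "\<lambda>i j l. a * f i j l"]) (simp add: scale_entry)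
qed

lemma dual_mult: "(dual_idempotent E x i ** M) $ y $ z = (if gdist E x y = i then M $ y $ z else 0)"
proof -
  have "(dual_idempotent E x i ** M) $ y $ z = (\<Sum>w\<in>UNIV. if w = y then (if gdist E x y = i then M $ y $ z else 0) else 0)"
    unfolding mult_entry dual_entry by (rule sum.cong) auto
  also have "\<dots> = (if gdist E x y = i then M $ y $ z else 0)" by simp
  finally show ?thesis .
qed

lemma mult_dual: "(M ** dual_idempotent E x j) $ y $ z = (if gdist E x z = j then M $ y $ z else 0)"
proof -
  have "(M ** dual_idempotent E x j) $ y $ z = (\<Sum>w\<in>UNIV. if w = z then (if gdist E x z = j then M $ y $ z else 0) else 0)"
    unfolding mult_entry dual_entry by (rule sum.cong) auto
  also have "\<dots> = (if gdist E x z = j then M $ y $ z else 0)" by simp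
  finally show ?thesis .
qed

lemma Bset_dual: "M \<in> Bset E x \<Longrightarrow> dual_idempotent E x i ** M \<in> Bset E x"
proof -
  assume "M \<in> Bset E x"
  then obtain f where "\<forall>y z. M $ y $ z = f (gdist E x y) (gdist E x z) (gdist E y z)"
    unfolding Bset_def by blast
  then show ?thesis unfolding Bset_def
    by (intro CollectI exI[of _ "\<lambda>a b c. if a = i then f a b c else 0"]) (simp add: dual_mult)
qed

lemma scale_mult: "cmat_scale a M ** N = cmat_scale a (M ** N)"
  by (simp add: vec_eq_iff mult_entry scale_entry sum_distrib_left mult.assoc)

lemma add_mult: "(M + M') ** N = M ** N + M' ** (N :: complex^'n::finite^'n)"
  by (simp add: vec_eq_iff mult_entry sum.distrib distrib_right)

lemma sum2_delta: "a \<le> 3 \<Longrightarrow> c \<le> 3 \<Longrightarrow>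
  (\<Sum>h\<in>{..3::nat}. \<Sum>b\<in>{..3::nat}. if h = a \<and> b = c then g h b else 0) = (g a c :: complex)"
proof -
  assume ac: "a \<le> 3" "c \<le> 3"
  have "(\<Sum>b\<in>{..3::nat}. if h = a \<and> b = c then g h b else 0) = (if h = a then g h c else 0)" for h
    using ac by (cases "h = a") simp_all
  then show ?thesis using ac by simp
qed

context tay begin

lemma class_fun:
  assumes "\<And>y z y2 z2. d x y = d x y2 \<Longrightarrow> d x z = d x z2 \<Longrightarrow> d y z = d y2 z2 \<Longrightarrow> P y z = P y2 z2"
  shows "\<exists>f. \<forall>y z. P y z = f (d x y) (d x z) (d y z)"
proof -
  define f where "f i j l = (let pp = SOME pp. (d x (fst pp), d x (snd pp), d (fst pp) (snd pp)) = (i,j,l) in P (fst pp) (snd pp))" for i j l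
  have "P y z = f (d x y) (d x z) (d y z)" for y z
  proof -
    let ?pp = "SOME pp. (d x (fst pp), d x (snd pp), d (fst pp) (snd pp)) = (d x y, d x z, d y z)"
    have ex: "\<exists>pp. (d x (fst pp), d x (snd pp), d (fst pp) (snd pp)) = (d x y, d x z, d y z)"
      by (rule exI[of _ "(y,z)"]) simp
    have "(d x (fst ?pp), d x (snd ?pp), d (fst ?pp) (snd ?pp)) = (d x y, d x z, d y z)"
      by (rule someI_ex[OF ex])
    then have "P (fst ?pp) (snd ?pp) = P y z" using assms[of "fst ?pp" y "snd ?pp" z] by simp
    then show ?thesis unfolding f_def Let_def by simp
  qed
  then show ?thesis by blast
qed

lemma adj_mult_Bset: assumes "M \<in> Bset E x" shows "adj_matrix E ** M \<in> Bset E x"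
proof -
  obtain f where f: "\<forall>y z. M $ y $ z = f (d x y) (d x z) (d y z)"
    using assms unfolding Bset_def by blast
  define G where "G y z = (\<Sum>h\<in>{..3::nat}. \<Sum>b\<in>{..3::nat}. of_nat (N x y z h b) * f h (d x z) b)" for y z
  have eq: "(adj_matrix E ** M) $ y $ z = G y z" for y z
  proof -
    have "(adj_matrix E ** M) $ y $ z = (\<Sum>w\<in>UNIV. if E y w then f (d x w) (d x z) (d z w) else 0)"
      unfolding mult_entry adj_entry
    proof (rule sum.cong)
      fix w
      have "M $ w $ z = f (d x w) (d x z) (d z w)" using f dsym[of w z] by simp
      then show "(if E y w then 1 else 0) * M $ w $ z = (if E y w then f (d x w) (d x z) (d z w) else 0)" by simp
    qed simp
    also have "\<dots> = (\<Sum>w\<in>UNIV. \<Sum>h\<in>{..3::nat}. \<Sum>b\<in>{..3::nat}.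
         if E y w \<and> d x w = h \<and> d z w = b then f h (d x z) b else 0)"
    proof (rule sum.cong)
      fix w :: 'n
      have pw: "(if E y w \<and> d x w = h \<and> d z w = b then f h (d x z) b else 0)
         = (if h = d x w \<and> b = d z w then (if E y w then f h (d x z) b else 0) else 0)" for h b
        by auto
      have "(\<Sum>h\<in>{..3::nat}. \<Sum>b\<in>{..3::nat}. if E y w \<and> d x w = h \<and> d z w = b then f h (d x z) b else 0)
        = (\<Sum>h\<in>{..3::nat}. \<Sum>b\<in>{..3::nat}. if h = d x w \<and> b = d z w then (if E y w then f h (d x z) b else 0) else 0)"
        by (simp only: pw)
      also have "\<dots> = (if E y w then f (d x w) (d x z) (d z w) else 0)"
        by (rule sum2_delta) (use dle3[of x w] dle3[of z w] in auto)
      finally show "(if E y w then f (d x w) (d x z) (d z w) else 0) = (\<Sum>h\<in>{..3::nat}. \<Sum>b\<in>{..3::nat}.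
         if E y w \<and> d x w = h \<and> d z w = b then f h (d x z) b else 0)" by (rule sym)
    qed simp
    also have "\<dots> = (\<Sum>h\<in>{..3::nat}. \<Sum>w\<in>UNIV. \<Sum>b\<in>{..3::nat}.
         if E y w \<and> d x w = h \<and> d z w = b then f h (d x z) b else 0)"
      by (rule sum.swap)
    also have "\<dots> = (\<Sum>h\<in>{..3::nat}. \<Sum>b\<in>{..3::nat}. \<Sum>w\<in>UNIV.
         if E y w \<and> d x w = h \<and> d z w = b then f h (d x z) b else 0)"
      by (rule sum.cong[OF refl], rule sum.swap)
    also have "\<dots> = G y z"
      unfolding G_def N_def by (simp add: sum_if_card)
    finally show ?thesis .
  qed
  have "\<exists>g. \<forall>y z. G y z = g (d x y) (d x z) (d y z)"
  proof (rule class_fun)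
    fix y z y2 z2 assume a: "d x y = d x y2" "d x z = d x z2" "d y z = d y2 z2"
    show "G y z = G y2 z2" unfolding G_def
      by (intro sum.cong refl) (use Ndet[OF a] a(2) in simp)
  qed
  then show ?thesis unfolding Bset_def using eq by auto
qed

lemma mat1_Bset: "mat 1 \<in> Bset E x"
  unfolding Bset_def
  by (intro CollectI exI[of _ "\<lambda>i j l. if l = 0 then 1 else 0"]) (simp add: mat_def d0)

lemma T_sub_B: "terwilliger E x \<subseteq> Bset E x"
proof -
  have "M \<in> {M. \<forall>N\<in>Bset E x. M ** N \<in> Bset E x}" if "M \<in> terwilliger E x" for M
    using that unfolding terwilliger_def
  proof (induction rule: gen_algebra.induct)
    case (gen M)
    then show ?case using adj_mult_Bset Bset_dual by auto
  next
    case one then show ?case by simp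
  next
    case (add M N) then show ?case by (simp add: add_mult Bset_add)
  next
    case (scale M a) then show ?case by (simp add: scale_mult Bset_scale)
  next
    case (mult M N) then show ?case by (simp add: matrix_mul_assoc[symmetric])
  qed
  note L = this
  show ?thesis
  proof
    fix M assume "M \<in> terwilliger E x"
    then have "M ** mat 1 \<in> Bset E x" using L mat1_Bset by blast
    then show "M \<in> Bset E x" by simp
  qed
qed

end


interpretation cv: vector_space "cmat_scale :: complex \<Rightarrow> complex^'n::finite^'n \<Rightarrow> complex^'n^'n"
  by unfold_locales (simp_all add: vec_eq_iff scale_entry algebra_simps)

definition Adist :: "('n::finite \<Rightarrow> 'n \<Rightarrow> bool) \<Rightarrow> nat \<Rightarrow> complex^'n^'n" where
  "Adist E l = (\<chi> y z. if gdist E y z = l then 1 else 0)"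

definition Dm :: "('n::finite \<Rightarrow> 'n \<Rightarrow> bool) \<Rightarrow> 'n \<Rightarrow> nat \<times> nat \<times> nat \<Rightarrow> complex^'n^'n" where
  "Dm E x t = (\<chi> y z. if (gdist E x y, gdist E x z, gdist E y z) = t then 1 else 0)"

lemma Adist_entry: "Adist E l $ y $ z = (if gdist E y z = l then 1 else 0)"
  by (simp add: Adist_def)

lemma Dm_entry: "Dm E x t $ y $ z = (if (gdist E x y, gdist E x z, gdist E y z) = t then 1 else 0)"
  by (simp add: Dm_def)

lemma T_one: "mat 1 \<in> terwilliger E x" unfolding terwilliger_def by (rule gen_algebra.one)
lemma T_add: "M \<in> terwilliger E x \<Longrightarrow> N \<in> terwilliger E x \<Longrightarrow> M + N \<in> terwilliger E x"
  unfolding terwilliger_def by (rule gen_algebra.add)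
lemma T_scale: "M \<in> terwilliger E x \<Longrightarrow> cmat_scale a M \<in> terwilliger E x"
  unfolding terwilliger_def by (rule gen_algebra.scale)
lemma T_mult: "M \<in> terwilliger E x \<Longrightarrow> N \<in> terwilliger E x \<Longrightarrow> M ** N \<in> terwilliger E x"
  unfolding terwilliger_def by (rule gen_algebra.mult)
lemma T_adj: "adj_matrix E \<in> terwilliger E x"
  unfolding terwilliger_def by (rule gen_algebra.gen) simp
lemma T_dual: "i \<le> 3 \<Longrightarrow> dual_idempotent E x i \<in> terwilliger E x"
  unfolding terwilliger_def by (rule gen_algebra.gen) simp

lemma T_zero: "0 \<in> terwilliger E x"
proof -
  have "cmat_scale 0 (mat 1) = (0 :: complex^'a^'a)" by (simp add: vec_eq_iff scale_entry)
  then show ?thesis using T_scale[OF T_one, where a=0 and E=E and x=x] by simp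
qed

lemma T_subspace: "cv.subspace (terwilliger E x)"
  unfolding cv.subspace_def using T_zero T_add T_scale by blast

context tay begin

lemma Adist0: "Adist E 0 = mat 1"
  by (simp add: vec_eq_iff Adist_entry mat_def d0)

lemma Adist1: "Adist E 1 = adj_matrix E"
  unfolding vec_eq_iff Adist_entry adj_entry using d1 by auto

lemma AA_entry: "(adj_matrix E ** adj_matrix E) $ y $ z = of_nat (card {w. E y w \<and> d z w = 1})"
proof -
  have "(adj_matrix E ** adj_matrix E) $ y $ z = (\<Sum>w\<in>UNIV. if E y w \<and> d z w = 1 then 1 else 0)"
    unfolding mult_entry adj_entry
  proof (rule sum.cong)
    fix w show "(if E y w then 1 else 0) * (if E w z then 1 else 0) = (if E y w \<and> d z w = 1 then 1 else (0::complex))"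
      using d1[of z w] Esym[of z w] Esym[of w z] by auto
  qed simp
  then show ?thesis by (simp add: sum_if_card)
qed

lemma AA2_entry: "(adj_matrix E ** Adist E 2) $ y $ z = of_nat (card {w. E y w \<and> d z w = 2})"
proof -
  have "(adj_matrix E ** Adist E 2) $ y $ z = (\<Sum>w\<in>UNIV. if E y w \<and> d z w = 2 then 1 else 0)"
    unfolding mult_entry adj_entry Adist_entry
  proof (rule sum.cong)
    fix w show "(if E y w then 1 else 0) * (if d w z = 2 then 1 else 0) = (if E y w \<and> d z w = 2 then 1 else (0::complex))"
      using dsym[of w z] by auto
  qed simp
  then show ?thesis by (simp add: sum_if_card)
qed

lemma c1val: "card {w. E y w \<and> d z w = 1} = (if d z y = 0 then k else if d z y = 1 then k - 1 - bb else if d z y = 2 then bb else 0)"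
proof -
  consider "d z y = 0" | "d z y = 1" | "d z y = 2" | "d z y = 3" using dle3[of z y] by linarith
  then show ?thesis
  proof cases
    case 1 then show ?thesis using S_plus[of y z] by simp
  next
    case 2 then show ?thesis using S_total[of z y] S_plus[of y z] S_minus[of z y] by simp
  next
    case 3 then show ?thesis using S_minus[of z y] by simp
  next
    case 4 then show ?thesis using S_other[of 1 z y] by simp
  qed
qed

lemma c2val: "card {w. E y w \<and> d z w = 2} = (if d z y = 0 then 0 else if d z y = 1 then bb else if d z y = 2 then k - 1 - bb else k)"
proof -
  consider "d z y = 0" | "d z y = 1" | "d z y = 2" | "d z y = 3" using dle3[of z y] by linarith
  then show ?thesis
  proof cases
    case 1 then show ?thesis using S_other[of 2 z y] by simp
  next
    case 2 then show ?thesis using S_plus[of y z] by (simp add: numeral_2_eq_2)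
  next
    case 3 then show ?thesis using S_total[of z y] S_plus[of y z] S_minus[of z y] by simp
  next
    case 4 then show ?thesis using S_minus[of z y] by simp
  qed
qed

lemma Adist2: "Adist E 2 = cmat_scale (1 / of_nat bb) (adj_matrix E ** adj_matrix E)
   + cmat_scale (- of_nat k / of_nat bb) (mat 1) + cmat_scale (- of_nat (k - 1 - bb) / of_nat bb) (adj_matrix E)"
proof -
  have bb0: "(of_nat bb :: complex) \<noteq> 0" using bb_pos by simp
  show ?thesis
  proof (simp only: vec_eq_iff, intro allI)
    fix y z
    have dz: "d z y = d y z" by (rule dsym)
    have aa: "(adj_matrix E ** adj_matrix E) $ y $ z = of_nat (if d y z = 0 then k else if d y z = 1 then k - 1 - bb else if d y z = 2 then bb else 0)"
      unfolding AA_entry c1val dz ..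
    consider "d y z = 0" | "d y z = 1" | "d y z = 2" | "d y z = 3" using dle3[of y z] by linarith
    then show "Adist E 2 $ y $ z = (cmat_scale (1 / of_nat bb) (adj_matrix E ** adj_matrix E)
      + cmat_scale (- of_nat k / of_nat bb) (mat 1) + cmat_scale (- of_nat (k - 1 - bb) / of_nat bb) (adj_matrix E)) $ y $ z"
    proof cases
      case 1 then have "y = z" using d0 by blast
      then show ?thesis using bb0 Eirr[of z] 1 aa by (simp add: scale_entry Adist_entry mat_def adj_entry field_simps)
    next
      case 2 then have "E y z" "y \<noteq> z" using d1[of y z] d0[of y z] Eirr[of y] by auto
      then show ?thesis using bb0 2 dz aa by (simp add: scale_entry Adist_entry mat_def adj_entry field_simps)
    next
      case 3 then have "\<not> E y z" "y \<noteq> z" using d1[of y z] d0[of y z] Eirr[of y] by auto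
      then show ?thesis using bb0 3 dz aa by (simp add: scale_entry Adist_entry mat_def adj_entry field_simps)
    next
      case 4 then have "\<not> E y z" "y \<noteq> z" using d1[of y z] d0[of y z] Eirr[of y] by auto
      then show ?thesis using bb0 4 dz aa by (simp add: scale_entry Adist_entry mat_def adj_entry field_simps)
    qed
  qed
qed

lemma Adist3: "Adist E 3 = cmat_scale (1 / of_nat k) (adj_matrix E ** Adist E 2)
   + cmat_scale (- of_nat bb / of_nat k) (adj_matrix E) + cmat_scale (- of_nat (k - 1 - bb) / of_nat k) (Adist E 2)"
proof -
  have k0: "(of_nat k :: complex) \<noteq> 0" using k_pos by simp
  show ?thesis
  proof (simp only: vec_eq_iff, intro allI)
    fix y z
    have dz: "d z y = d y z" by (rule dsym)
    have aa: "(adj_matrix E ** Adist E 2) $ y $ z = of_nat (if d y z = 0 then 0 else if d y z = 1 then bb else if d y z = 2 then k - 1 - bb else k)"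
      unfolding AA2_entry c2val dz ..
    consider "d y z = 0" | "d y z = 1" | "d y z = 2" | "d y z = 3" using dle3[of y z] by linarith
    then show "Adist E 3 $ y $ z = (cmat_scale (1 / of_nat k) (adj_matrix E ** Adist E 2)
      + cmat_scale (- of_nat bb / of_nat k) (adj_matrix E) + cmat_scale (- of_nat (k - 1 - bb) / of_nat k) (Adist E 2)) $ y $ z"
    proof cases
      case 1 then have "y = z" using d0 by blast
      then show ?thesis using k0 Eirr[of z] 1 aa by (simp add: scale_entry Adist_entry adj_entry field_simps)
    next
      case 2 then have "E y z" using d1[of y z] by auto
      then show ?thesis using k0 2 dz aa by (simp add: scale_entry Adist_entry adj_entry field_simps)
    next
      case 3 then have "\<not> E y z" using d1[of y z] by auto
      then show ?thesis using k0 3 dz aa by (simp add: scale_entry Adist_entry adj_entry field_simps)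
    next
      case 4 then have "\<not> E y z" using d1[of y z] by auto
      then show ?thesis using k0 4 dz aa by (simp add: scale_entry Adist_entry adj_entry field_simps)
    qed
  qed
qed

lemma Adist_T: "l \<le> 3 \<Longrightarrow> Adist E l \<in> terwilliger E x"
proof -
  assume l: "l \<le> 3"
  have A0: "Adist E 0 \<in> terwilliger E x" using Adist0 T_one by metis
  have A1: "Adist E 1 \<in> terwilliger E x" using Adist1 T_adj by metis
  have A2: "Adist E 2 \<in> terwilliger E x" unfolding Adist2
    by (intro T_add T_scale T_mult T_adj T_one)
  have A3: "Adist E 3 \<in> terwilliger E x" unfolding Adist3
    by (intro T_add T_scale T_mult T_adj A2)
  consider "l = 0" | "l = 1" | "l = 2" | "l = 3" using l by linarith
  then show ?thesis using A0 A1 A2 A3 by cases auto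
qed

lemma Dm_T: "i \<le> 3 \<Longrightarrow> j \<le> 3 \<Longrightarrow> l \<le> 3 \<Longrightarrow> Dm E x (i,j,l) \<in> terwilliger E x"
proof -
  assume a: "i \<le> 3" "j \<le> 3" "l \<le> 3"
  have "Dm E x (i,j,l) = dual_idempotent E x i ** (Adist E l ** dual_idempotent E x j)"
    by (simp add: vec_eq_iff Dm_entry dual_mult mult_dual Adist_entry)
  then show ?thesis using a by (simp add: T_mult T_dual Adist_T)
qed

end


definition Rexp :: "(nat \<times> nat \<times> nat) set" where
  "Rexp = {(0,0,0),(0,1,1),(0,2,2),(0,3,3),(1,0,1),(2,0,2),(3,0,3),(3,1,2),(3,2,1),(3,3,0),(1,3,2),(2,3,1),
    (1,1,0),(1,1,1),(1,1,2),(2,2,0),(2,2,1),(2,2,2),(1,2,1),(1,2,2),(1,2,3),(2,1,1),(2,1,2),(2,1,3)}"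

lemma card_Rexp: "card Rexp = 24"
  unfolding Rexp_def by simp

lemma le3_cases: "(i::nat) \<le> 3 \<longleftrightarrow> i = 0 \<or> i = 1 \<or> i = 2 \<or> i = 3" by auto

lemma in_Rexp:
  assumes "i \<le> 3" "j \<le> 3" "l \<le> 3" "i = 0 \<longrightarrow> l = j" "j = 0 \<longrightarrow> l = i"
    "i = 3 \<longrightarrow> l = 3 - j" "j = 3 \<longrightarrow> l = 3 - i" "i = j \<longrightarrow> i \<in> {1,2} \<longrightarrow> l \<le> 2" "i \<noteq> j \<longrightarrow> l \<noteq> 0"
  shows "(i,j,l) \<in> Rexp"
proof -
  have "i = 0 \<or> i = 1 \<or> i = 2 \<or> i = 3" "j = 0 \<or> j = 1 \<or> j = 2 \<or> j = 3" "l = 0 \<or> l = 1 \<or> l = 2 \<or> l = 3"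
    using assms(1-3) by auto
  then show ?thesis using assms(4-9) unfolding Rexp_def by (elim disjE) simp_all
qed

context tay begin

definition R where "R x = (\<lambda>(y,z). (d x y, d x z, d y z)) ` UNIV"

lemma d_le2: "d x p = 1 \<Longrightarrow> d x q = 1 \<Longrightarrow> d p q \<le> 2"
proof -
  assume a: "d x p = 1" "d x q = 1"
  have "E x q" using a(2) d1 by blast
  then have "d p q \<le> d p x + 1" by (rule d_step)
  then show ?thesis using a(1) dsym[of p x] by simp
qed

lemma R_sub: "R x \<subseteq> Rexp"
proof
  fix t assume "t \<in> R x"
  then obtain y z where t: "t = (d x y, d x z, d y z)" unfolding R_def by auto
  have c0: "d x y = 0 \<longrightarrow> d y z = d x z" using d0[of x y] by auto
  have c0': "d x z = 0 \<longrightarrow> d y z = d x y" using d0[of x z] dsym[of x y] by auto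
  have c3: "d x y = 3 \<longrightarrow> d y z = 3 - d x z"
  proof
    assume "d x y = 3" then have "y = sig x" by (rule sig_uniq)
    then show "d y z = 3 - d x z" using d_sig2[of x z] by simp
  qed
  have c3': "d x z = 3 \<longrightarrow> d y z = 3 - d x y"
  proof
    assume "d x z = 3" then have "z = sig x" by (rule sig_uniq)
    then show "d y z = 3 - d x y" using d_sig[of y x] dsym[of y x] by simp
  qed
  have cm: "d x y = d x z \<longrightarrow> d x y \<in> {1,2} \<longrightarrow> d y z \<le> 2"
  proof (intro impI)
    assume a: "d x y = d x z" "d x y \<in> {1,2}"
    show "d y z \<le> 2"
    proof (cases "d x y = 1")
      case True then show ?thesis using d_le2[of x y z] a by simp
    next
      case False
      then have "d x (sig y) = 1" "d x (sig z) = 1" using a d_sig[of x y] d_sig[of x z] by auto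
      then have "d (sig y) (sig z) \<le> 2" by (rule d_le2)
      then show ?thesis using d_sig_sig[of y z] by simp
    qed
  qed
  have cn: "d x y \<noteq> d x z \<longrightarrow> d y z \<noteq> 0" using d0[of y z] by auto
  show "t \<in> Rexp" unfolding t
    by (rule in_Rexp) (use dle3[of x y] dle3[of x z] dle3[of y z] c0 c0' c3 c3' cm cn in auto)
qed

lemma R_sup: "Rexp \<subseteq> R x"
proof -
  have W: "(d x p, d x q, d p q) \<in> R x" for p q unfolding R_def by auto
  obtain y1 where y1: "d x y1 = 1" using fwd[of 1 x] by auto
  have "card {w. E y1 w \<and> d x w = d x y1 - 1} + card {w. E y1 w \<and> d x w = d x y1}
   + card {w. E y1 w \<and> d x w = d x y1 + 1} = k" using S_total[of x y1] y1 by simp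
  moreover have "card {w. E y1 w \<and> d x w = d x y1 - 1} = 1" using S_minus[of x y1] y1 by simp
  moreover have "card {w. E y1 w \<and> d x w = d x y1 + 1} = bb" using S_plus[of y1 x] y1 by simp
  ultimately have "card {w. E y1 w \<and> d x w = 1} > 0" using bk y1 by simp
  then obtain z1 where z1: "E y1 z1" "d x z1 = 1" by (metis (mono_tags, lifting) Collect_empty_eq card.empty less_irrefl)
  have "card {w. E y1 w \<and> d x w = d x y1 + 1} > 0" using S_plus[of y1 x] y1 bb_pos by simp
  then obtain y2 where y2: "E y1 y2" "d x y2 = 2" using y1 by (metis (mono_tags, lifting) Collect_empty_eq card.empty less_irrefl one_add_one)
  have e1: "d y1 z1 = 1" "d z1 y1 = 1" "d y1 y2 = 1" "d y2 y1 = 1" using z1 y2 d1 Esym by auto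
  have e2: "d y1 x = 1" "d z1 x = 1" "d y2 x = 2" using y1 z1 y2 dsym by metis+
  note S = d_sig d_sig2 e1 e2 y1 z1(2) y2(2)
  show ?thesis unfolding Rexp_def
  proof (intro insert_subsetI empty_subsetI)
    show "(0,0,0) \<in> R x" using W[of x x] by simp
    show "(0,1,1) \<in> R x" using W[of x y1] S by simp
    show "(0,2,2) \<in> R x" using W[of x "sig y1"] S by simp
    show "(0,3,3) \<in> R x" using W[of x "sig x"] S by simp
    show "(1,0,1) \<in> R x" using W[of y1 x] S by simp
    show "(2,0,2) \<in> R x" using W[of "sig y1" x] S by simp
    show "(3,0,3) \<in> R x" using W[of "sig x" x] S by simp
    show "(3,1,2) \<in> R x" using W[of "sig x" y1] S by simp
    show "(3,2,1) \<in> R x" using W[of "sig x" "sig y1"] S by simp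
    show "(3,3,0) \<in> R x" using W[of "sig x" "sig x"] S by simp
    show "(1,3,2) \<in> R x" using W[of y1 "sig x"] S by simp
    show "(2,3,1) \<in> R x" using W[of "sig y1" "sig x"] S by simp
    show "(1,1,0) \<in> R x" using W[of y1 y1] S by simp
    show "(1,1,1) \<in> R x" using W[of y1 z1] S by simp
    show "(1,1,2) \<in> R x" using W[of y1 "sig y2"] S by simp
    show "(2,2,0) \<in> R x" using W[of "sig y1" "sig y1"] S by simp
    show "(2,2,1) \<in> R x" using W[of "sig y1" "sig z1"] S by simp
    show "(2,2,2) \<in> R x" using W[of "sig y1" y2] S by simp
    show "(1,2,1) \<in> R x" using W[of y1 y2] S by simp
    show "(1,2,2) \<in> R x" using W[of y1 "sig z1"] S by simp
    show "(1,2,3) \<in> R x" using W[of y1 "sig y1"] S by simp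
    show "(2,1,1) \<in> R x" using W[of y2 y1] S by simp
    show "(2,1,2) \<in> R x" using W[of "sig z1" y1] S by simp
    show "(2,1,3) \<in> R x" using W[of "sig y1" y1] S by simp
  qed
qed

lemma R_eq: "R x = Rexp" using R_sub R_sup by blast

lemma tau_R: "(d x y, d x z, d y z) \<in> R x" unfolding R_def by auto

lemma Dm_inj: "inj_on (Dm E x) (R x)"
proof
  fix s t assume s: "s \<in> R x" and "t \<in> R x" and eq: "Dm E x s = Dm E x t"
  obtain y z where "s = (d x y, d x z, d y z)" using s unfolding R_def by auto
  moreover have "Dm E x s $ y $ z = Dm E x t $ y $ z" using eq by simp
  ultimately show "s = t" unfolding Dm_entry by (auto split: if_splits)
qed

lemma finR: "finite (R x)" unfolding R_def by simp

lemma span_eq: "cv.span (Dm E x ` R x) = terwilliger E x"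
proof
  show "cv.span (Dm E x ` R x) \<subseteq> terwilliger E x"
  proof (rule cv.span_minimal)
    show "Dm E x ` R x \<subseteq> terwilliger E x"
    proof
      fix M assume "M \<in> Dm E x ` R x"
      then obtain y z where "M = Dm E x (d x y, d x z, d y z)" unfolding R_def by auto
      then show "M \<in> terwilliger E x" using Dm_T dle3 by simp
    qed
    show "cv.subspace (terwilliger E x)" by (rule T_subspace)
  qed
next
  show "terwilliger E x \<subseteq> cv.span (Dm E x ` R x)"
  proof
    fix M assume "M \<in> terwilliger E x"
    then have "M \<in> Bset E x" using T_sub_B by blast
    then obtain f where f: "\<forall>y z. M $ y $ z = f (d x y) (d x z) (d y z)" unfolding Bset_def by blast
    define g where "g t = (case t of (i,j,l) \<Rightarrow> f i j l)" for t
    have "M = (\<Sum>t\<in>R x. cmat_scale (g t) (Dm E x t))"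
    proof (simp only: vec_eq_iff, intro allI)
      fix y z
      have "(\<Sum>t\<in>R x. cmat_scale (g t) (Dm E x t)) $ y $ z = (\<Sum>t\<in>R x. if t = (d x y, d x z, d y z) then g t else 0)"
        unfolding sum_component by (rule sum.cong) (auto simp: scale_entry Dm_entry)
      also have "\<dots> = g (d x y, d x z, d y z)" using tau_R[of x y z] finR by (simp add: sum.delta)
      finally show "M $ y $ z = (\<Sum>t\<in>R x. cmat_scale (g t) (Dm E x t)) $ y $ z" using f g_def by simp
    qed
    also have "\<dots> \<in> cv.span (Dm E x ` R x)"
      by (intro cv.span_sum cv.span_scale cv.span_base) auto
    finally show "M \<in> cv.span (Dm E x ` R x)" .
  qed
qed

lemma indep: "cv.independent (Dm E x ` R x)"
proof -
  have fin: "finite (Dm E x ` R x)" unfolding R_def by simp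
  have "\<forall>v\<in>Dm E x ` R x. c v = 0" if sum0: "(\<Sum>v\<in>Dm E x ` R x. cmat_scale (c v) v) = 0" for c
  proof
    fix v assume "v \<in> Dm E x ` R x"
    then obtain y z where v: "v = Dm E x (d x y, d x z, d y z)" unfolding R_def by auto
    have ent: "w $ y $ z = (if w = v then 1 else 0)" if w_in: "w \<in> Dm E x ` R x" for w
    proof -
      obtain t where t: "t \<in> R x" "w = Dm E x t" using w_in by blast
      have "w = v \<longleftrightarrow> t = (d x y, d x z, d y z)"
        using Dm_inj[of x] t tau_R[of x y z] v by (auto simp: inj_on_def)
      then show ?thesis using t by (auto simp: Dm_entry)
    qed
    have "0 = (\<Sum>w\<in>Dm E x ` R x. cmat_scale (c w) w) $ y $ z" using sum0 by simp
    also have "\<dots> = (\<Sum>w\<in>Dm E x ` R x. if w = v then c w else 0)"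
      unfolding sum_component by (rule sum.cong) (auto simp: scale_entry ent)
    also have "\<dots> = c v" using fin \<open>v \<in> Dm E x ` R x\<close> by simp
    finally show "c v = 0" by simp
  qed
  then show ?thesis using cv.dependent_finite[OF fin] by blast
qed

lemma dimT: "cv.dim (terwilliger E x) = 24"
proof -
  have "cv.dim (terwilliger E x) = cv.dim (cv.span (Dm E x ` R x))" using span_eq by simp
  also have "\<dots> = card (Dm E x ` R x)" using indep by (rule cv.dim_span_eq_card_independent)
  also have "\<dots> = card (R x)" using Dm_inj by (rule card_image)
  also have "\<dots> = 24" using R_eq card_Rexp by simp
  finally show ?thesis .
qed

end

theorem proposition7p8:
  fixes E :: "'n::finite \<Rightarrow> 'n \<Rightarrow> bool" and x :: 'n
  assumes "taylor_graph E"
  shows "vector_space.dim cmat_scale (terwilliger E x) = 24"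
proof -
  obtain k bb where "bb < k - 1" "distance_regular E 3 (\<lambda>i. [k, bb, 1] ! i) (\<lambda>i. [0, 1, bb, k] ! i)"
    using assms unfolding taylor_graph_def by blast
  then interpret tay E k bb by unfold_locales
  show ?thesis by (rule dimT)
qed

end
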